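(* Let $(\mathcal{M},\mathfrak{g})$ be a $C^{3}$-smooth $n$-dimensional Riemannian manifold with $C^{3}$ metric. Let $v\in C^{2}(\mathcal{M})$ be real-valued, $\ell\in C^{3}(\mathcal{M})$, $\theta=e^{\ell}$, $u=\theta v$. Let $Q$ be a field of $\mathfrak g$-symmetric linear maps on tangent spaces with $C^{1}$ coefficients, $I$ the identity, $Y$ a $C^{1}$ vector field and $R\in C^{1}(\mathcal{M})$. Set \[ I_{1}=\mathrm{div}_{\mathfrak{g}}[(Q+I)\nabla_{\mathfrak{g}}u]+\langle Y,\nabla_{\mathfrak{g}}u\rangle_{\mathfrak{g}}+(|\nabla_{\mathfrak{g}}\ell|_{\mathfrak{g}}^{2}+R)u,\quad I_{2}=-\mathrm{div}_{\mathfrak{g}}(Q\nabla_{\mathfrak{g}}u)-\langle2\nabla_{\mathfrak{g}}\ell+Y,\nabla_{\mathfrak{g}}u\rangle_{\mathfrak{g}}-(\Delta_{\mathfrak{g}}\ell+R)u, \] so that $\theta\Delta_{\mathfrak g}v=I_1+I_2$. Then \[ |e^{\ell}\Delta_{\mathfrak{g}}v|^{2}+\mathrm{div}_{\mathfrak{g}}V=|I_{1}|^{2}+|I_{2}|^{2}+B_{1}u^{2}+2B_{2}u+2(B_{3}+F)+B_{4}, \] where \[ \begin{aligned} B_{1}=&(\Delta_{\mathfrak{g}}\ell+R)\mathrm{div}_{\mathfrak{g}}Y+(|\nabla_{\mathfrak{g}}\ell|_{\mathfrak{g}}^{2}+R)\mathrm{div}_{\mathfrak{g}}(2\nabla_{\mathfrak{g}}\ell+Y)+\langle\nabla_{\mathfrak{g}}(\Delta_{\mathfrak{g}}\ell+R),Y\rangle_{\mathfrak{g}}\\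 &+\langle\nabla_{\mathfrak{g}}(|\nabla_{\mathfrak{g}}\ell|_{\mathfrak{g}}^{2}+R),2\nabla_{\mathfrak{g}}\ell+Y\rangle_{\mathfrak{g}}-2(|\nabla_{\mathfrak{g}}\ell|_{\mathfrak{g}}^{2}+R)(\Delta_{\mathfrak{g}}\ell+R),\\ B_{2}=&\langle\nabla_{\mathfrak{g}}(\Delta_{\mathfrak{g}}\ell+R),(Q+I)\nabla_{\mathfrak{g}}u\rangle_{\mathfrak{g}}+\langle\nabla_{\mathfrak{g}}(|\nabla_{\mathfrak{g}}\ell|_{\mathfrak{g}}^{2}+R),Q\nabla_{\mathfrak{g}}u\rangle_{\mathfrak{g}},\\ B_{3}=&\langle(\mathcal{D}_{\mathfrak{g}}(2\nabla_{\mathfrak{g}}\ell+Y),\nabla_{\mathfrak{g}}u)_{\mathfrak{g}},(Q+I)\nabla_{\mathfrak{g}}u\rangle_{\mathfrak{g}}+\langle(\mathcal{D}_{\mathfrak{g}}Y,\nabla_{\mathfrak{g}}u)_{\mathfrak{g}},Q\nabla_{\mathfrak{g}}u\rangle_{\mathfrak{g}}\\ &+(\Delta_{\mathfrak{g}}\ell+R)\langle\nabla_{\mathfrak{g}}u,(Q+I)\nabla_{\mathfrak{g}}u\rangle_{\mathfrak{g}}+(|\nabla_{\mathfrak{g}}\ell|^{2}_{\mathfrak{g}}+R)\langle\nabla_{\mathfrak{g}}u,Q\nabla_{\mathfrak{g}}u\rangle_{\mathfrak{g}}\\ &-\langle Y,\nabla_{\mathfrak{g}}u\rangle_{\mathfrak{g}}\langle2\nabla_{\mathfrak{g}}\ell+Y,\nabla_{\mathfrak{g}}u\rangle_{\mathfrak{g}},\\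 B_{4}=&-2\,\mathrm{div}_{\mathfrak{g}}[(Q+I)\nabla_{\mathfrak{g}}u]\,\mathrm{div}_{\mathfrak{g}}(Q\nabla_{\mathfrak{g}}u),\\ F=&\langle(2\nabla_{\mathfrak{g}}\ell+Y,\mathcal{D}_{\mathfrak{g}}\nabla_{\mathfrak{g}}u)_{\mathfrak{g}},(Q+I)\nabla_{\mathfrak{g}}u\rangle_{\mathfrak{g}}+\langle(Y,\mathcal{D}_{\mathfrak{g}}\nabla_{\mathfrak{g}}u)_{\mathfrak{g}},Q\nabla_{\mathfrak{g}}u\rangle_{\mathfrak{g}},\\ V=&2\big[\langle2\nabla_{\mathfrak{g}}\ell+Y,\nabla_{\mathfrak{g}}u\rangle_{\mathfrak{g}}+(\Delta_{\mathfrak{g}}\ell+R)u\big](Q+I)\nabla_{\mathfrak{g}}u+2\big[\langle Y,\nabla_{\mathfrak{g}}u\rangle_{\mathfrak{g}}+(|\nabla_{\mathfrak{g}}\ell|_{\mathfrak{g}}^{2}+R)u\big]Q\nabla_{\mathfrak{g}}u\\ &+(|\nabla_{\mathfrak{g}}\ell|_{\mathfrak{g}}^{2}+R)u^{2}(2\nabla_{\mathfrak{g}}\ell+Y)+(\Delta_{\mathfrak{g}}\ell+R)u^{2}Y. \end{aligned} \]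
   Context: $\langle\cdot,\cdot\rangle_{\mathfrak g}$, $|\cdot|_{\mathfrak g}$, $\nabla_{\mathfrak g}$, $\mathrm{div}_{\mathfrak g}$, $\Delta_{\mathfrak g}$, $\mathcal D_{\mathfrak g}$ denote the metric inner product and norm, gradient, divergence, Laplace–Beltrami operator and Levi-Civita connection. For $C^1$ vector fields $W,Z$, $(\mathcal{D}_{\mathfrak{g}}W,Z)_{\mathfrak{g}}$ denotes the contraction of $\mathfrak g\otimes\mathcal D_{\mathfrak g}W\otimes Z$, i.e. the vector field characterized by $\langle(\mathcal{D}_{\mathfrak{g}}W,Z)_{\mathfrak{g}},T\rangle_{\mathfrak g}=\langle\mathcal D_{\mathfrak g,T}W,Z\rangle_{\mathfrak g}$ for all tangent $T$, and $(Z,\mathcal D_{\mathfrak g}W)_{\mathfrak g}:=(\mathcal D_{\mathfrak g}W,Z)_{\mathfrak g}$; thus $\nabla_{\mathfrak g}\langle W,Z\rangle_{\mathfrak g}=(\mathcal D_{\mathfrak g}W,Z)_{\mathfrak g}+(W,\mathcal D_{\mathfrak g}Z)_{\mathfrak g}$. *)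

theory Defs
  imports "HOL-Analysis.Analysis"
begin

text \<open>Local (single chart) coordinate rendering of Riemannian geometry.
  Points of the chart domain are x :: real^'n, the metric is the matrix
  field g x = (g_ij(x)), vector fields are given by their coordinate
  components W x $ i = W^i(x), and fields of linear maps by their matrices.\<close>

definition pd :: "(real^'n \<Rightarrow> real) \<Rightarrow> 'n \<Rightarrow> real^'n \<Rightarrow> real" where
  "pd f i x = deriv (\<lambda>t. f (x + t *\<^sub>R axis i 1)) 0"

fun Ck :: "nat \<Rightarrow> (real^'n) set \<Rightarrow> (real^'n \<Rightarrow> real) \<Rightarrow> bool" where
  "Ck 0 U f = continuous_on U f"
| "Ck (Suc k) U f = ((\<forall>x\<in>U. f differentiable (at x)) \<and> (\<forall>i. Ck k U (pd f i)))"

definition riem_metric :: "(real^'n) set \<Rightarrow> (real^'n \<Rightarrow> real^'n^'n) \<Rightarrow> bool" where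
  "riem_metric U g \<longleftrightarrow>
     (\<forall>x\<in>U. transpose (g x) = g x \<and>
        (\<forall>\<xi>::real^'n. \<xi> \<noteq> 0 \<longrightarrow> \<xi> \<bullet> (g x *v \<xi>) > 0))"

definition ginner :: "(real^'n \<Rightarrow> real^'n^'n) \<Rightarrow> real^'n \<Rightarrow> real^'n \<Rightarrow> real^'n \<Rightarrow> real" where
  "ginner g x W Z = (\<Sum>i\<in>UNIV. \<Sum>j\<in>UNIV. g x $ i $ j * W $ i * Z $ j)"

definition gnorm2 :: "(real^'n \<Rightarrow> real^'n^'n) \<Rightarrow> real^'n \<Rightarrow> real^'n \<Rightarrow> real" where
  "gnorm2 g x W = ginner g x W W"

definition ginv :: "(real^'n \<Rightarrow> real^'n^'n) \<Rightarrow> real^'n \<Rightarrow> real^'n^'n" where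
  "ginv g x = matrix_inv (g x)"

definition grad :: "(real^'n \<Rightarrow> real^'n^'n) \<Rightarrow> (real^'n \<Rightarrow> real) \<Rightarrow> real^'n \<Rightarrow> real^'n" where
  "grad g f x = ginv g x *v (\<chi> i. pd f i x)"

definition gdiv :: "(real^'n \<Rightarrow> real^'n^'n) \<Rightarrow> (real^'n \<Rightarrow> real^'n) \<Rightarrow> real^'n \<Rightarrow> real" where
  "gdiv g W x = (1 / sqrt (det (g x))) *
      (\<Sum>i\<in>UNIV. pd (\<lambda>y. sqrt (det (g y)) * W y $ i) i x)"

definition lap :: "(real^'n \<Rightarrow> real^'n^'n) \<Rightarrow> (real^'n \<Rightarrow> real) \<Rightarrow> real^'n \<Rightarrow> real" where
  "lap g f x = gdiv g (grad g f) x"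

definition chr :: "(real^'n \<Rightarrow> real^'n^'n) \<Rightarrow> 'n \<Rightarrow> 'n \<Rightarrow> 'n \<Rightarrow> real^'n \<Rightarrow> real" where
  "chr g k i j x = (1/2) * (\<Sum>l\<in>UNIV. ginv g x $ k $ l *
      (pd (\<lambda>y. g y $ j $ l) i x + pd (\<lambda>y. g y $ i $ l) j x - pd (\<lambda>y. g y $ i $ j) l x))"

definition covD :: "(real^'n \<Rightarrow> real^'n^'n) \<Rightarrow> (real^'n \<Rightarrow> real^'n) \<Rightarrow> real^'n \<Rightarrow> real^'n \<Rightarrow> real^'n" where
  "covD g W x T = (\<chi> k. \<Sum>i\<in>UNIV. T $ i *
      (pd (\<lambda>y. W y $ k) i x + (\<Sum>j\<in>UNIV. chr g k i j x * W x $ j)))"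

text \<open>(D W, Z)_g: the vector field with <(D W,Z)_g, T>_g = <D_T W, Z>_g for all T;
  its covariant components are <D_{e_i} W, Z>_g, then the index is raised.\<close>
definition dcontr :: "(real^'n \<Rightarrow> real^'n^'n) \<Rightarrow> (real^'n \<Rightarrow> real^'n) \<Rightarrow> (real^'n \<Rightarrow> real^'n) \<Rightarrow> real^'n \<Rightarrow> real^'n" where
  "dcontr g W Z x = ginv g x *v (\<chi> i. ginner g x (covD g W x (axis i 1)) (Z x))"

end

theory Submission
  imports Defs
begin



lemma pd_eqI:
  fixes f :: "real^'n \<Rightarrow> real"
  shows "((\<lambda>t. f (x + t *\<^sub>R axis i 1)) has_real_derivative D) (at 0) \<Longrightarrow> pd f i x = D"
  by (simp add: pd_def DERIV_imp_deriv)

lemma line_diff: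
  fixes f :: "real^'n \<Rightarrow> real"
  shows "f differentiable (at x) \<Longrightarrow> (\<lambda>t::real. f (x + t *\<^sub>R axis i 1)) differentiable (at 0)"
proof -
  assume a: "f differentiable (at x)"
  have "(\<lambda>t::real. x + t *\<^sub>R axis i (1::real)) differentiable (at 0)"
    by (intro derivative_intros)
  moreover have "f differentiable (at ((\<lambda>t::real. x + t *\<^sub>R axis i (1::real)) 0))" using a by simp
  ultimately show ?thesis using differentiable_chain_at[of "\<lambda>t::real. x + t *\<^sub>R axis i (1::real)" 0 f]
    by (simp add: o_def)
qed

lemma pd_DERIV:
  fixes f :: "real^'n \<Rightarrow> real"
  assumes "f differentiable (at x)"
  shows "((\<lambda>t. f (x + t *\<^sub>R axis i 1)) has_real_derivative pd f i x) (at 0)"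
  using line_diff[OF assms, of i] unfolding pd_def
  using DERIV_deriv_iff_real_differentiable by blast

lemma pd_add:
  fixes f h :: "real^'n \<Rightarrow> real"
  shows "f differentiable (at x) \<Longrightarrow> h differentiable (at x) \<Longrightarrow>
   pd (\<lambda>y. f y + h y) i x = pd f i x + pd h i x"
  by (rule pd_eqI) (rule DERIV_add[OF pd_DERIV pd_DERIV])

lemma pd_diff:
  fixes f h :: "real^'n \<Rightarrow> real"
  shows "f differentiable (at x) \<Longrightarrow> h differentiable (at x) \<Longrightarrow>
   pd (\<lambda>y. f y - h y) i x = pd f i x - pd h i x"
  by (rule pd_eqI) (rule DERIV_diff[OF pd_DERIV pd_DERIV])

lemma pd_mult:
  fixes f h :: "real^'n \<Rightarrow> real"
  shows "f differentiable (at x) \<Longrightarrow> h differentiable (at x) \<Longrightarrow>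
   pd (\<lambda>y. f y * h y) i x = f x * pd h i x + pd f i x * h x"
proof -
  assume a: "f differentiable (at x)" and b: "h differentiable (at x)"
  have "((\<lambda>t. f (x + t *\<^sub>R axis i 1) * h (x + t *\<^sub>R axis i 1)) has_real_derivative
     pd f i x * h (x + 0 *\<^sub>R axis i 1) + pd h i x * f (x + 0 *\<^sub>R axis i 1)) (at 0)"
    by (rule DERIV_mult[OF pd_DERIV[OF a] pd_DERIV[OF b]])
  then show ?thesis by (intro pd_eqI) (simp add: algebra_simps)
qed

lemma pd_const: "pd (\<lambda>y::real^'n. c) i x = 0"
  by (rule pd_eqI) simp

lemma pd_uminus:
  fixes f :: "real^'n \<Rightarrow> real"
  shows "f differentiable (at x) \<Longrightarrow> pd (\<lambda>y. - f y) i x = - pd f i x"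
  by (rule pd_eqI) (rule DERIV_minus[OF pd_DERIV])

lemma pd_exp:
  fixes f :: "real^'n \<Rightarrow> real"
  shows "f differentiable (at x) \<Longrightarrow> pd (\<lambda>y. exp (f y)) i x = exp (f x) * pd f i x"
  apply (rule pd_eqI)
  using DERIV_fun_exp[OF pd_DERIV, of f x i] by simp

lemma pd_inverse:
  fixes f :: "real^'n \<Rightarrow> real"
  shows "f differentiable (at x) \<Longrightarrow> f x \<noteq> 0 \<Longrightarrow>
   pd (\<lambda>y. inverse (f y)) i x = - (pd f i x * inverse (f x ^ 2))"
  apply (rule pd_eqI)
  using DERIV_inverse_fun[OF pd_DERIV, of f x i] by (simp add: power2_eq_square)

lemma pd_sqrt:
  fixes f :: "real^'n \<Rightarrow> real"
  shows "f differentiable (at x) \<Longrightarrow> f x > 0 \<Longrightarrow>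
   pd (\<lambda>y. sqrt (f y)) i x = inverse (sqrt (f x)) / 2 * pd f i x"
proof -
  assume a: "f differentiable (at x)" and b: "f x > 0"
  have "((\<lambda>t. sqrt (f (x + t *\<^sub>R axis i 1))) has_real_derivative
      inverse (sqrt (f (x + 0 *\<^sub>R axis i 1))) / 2 * pd f i x) (at 0)"
    by (rule DERIV_chain2[OF DERIV_real_sqrt pd_DERIV[OF a]]) (use b in simp)
  then show ?thesis by (intro pd_eqI) simp
qed

lemma pd_sum:
  fixes f :: "'a \<Rightarrow> real^'n \<Rightarrow> real"
  shows "finite S \<Longrightarrow> (\<And>a. a \<in> S \<Longrightarrow> f a differentiable (at x)) \<Longrightarrow>
   pd (\<lambda>y. \<Sum>a\<in>S. f a y) i x = (\<Sum>a\<in>S. pd (f a) i x)"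
  apply (rule pd_eqI)
  apply (rule DERIV_sum) using pd_DERIV by auto

lemma pd_cong:
  fixes f h :: "real^'n \<Rightarrow> real"
  assumes "open U" "x \<in> U" "\<And>y. y \<in> U \<Longrightarrow> f y = h y"
  shows "pd f i x = pd h i x"
  unfolding pd_def
proof (rule deriv_cong_ev[OF _ refl])
  have "open ((\<lambda>t::real. x + t *\<^sub>R axis i (1::real)) -` U)"
    by (rule open_vimage[OF assms(1)]) (intro continuous_intros)
  then have "\<forall>\<^sub>F t in nhds 0. x + t *\<^sub>R axis i 1 \<in> U"
    unfolding eventually_nhds using assms(2) by (intro exI[of _ "(\<lambda>t::real. x + t *\<^sub>R axis i (1::real)) -` U"]) auto
  then show "\<forall>\<^sub>F t in nhds 0. f (x + t *\<^sub>R axis i 1) = h (x + t *\<^sub>R axis i 1)"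
    by eventually_elim (use assms(3) in auto)
qed




lemma DERIV_differentiable: "DERIV f z :> D \<Longrightarrow> f differentiable (at z)"
  by (auto simp: differentiable_def has_field_derivative_def)

lemma Ck_cong:
  fixes f h :: "real^'n \<Rightarrow> real"
  assumes U: "open U"
  shows "(\<And>y. y \<in> U \<Longrightarrow> f y = h y) \<Longrightarrow> Ck k U f \<Longrightarrow> Ck k U h"
proof (induction k arbitrary: f h)
  case 0
  then show ?case using continuous_on_cong by (metis Ck.simps(1))
next
  case (Suc k)
  have "h differentiable (at x)" if "x \<in> U" for x
  proof -
    from Suc.prems(2) that obtain D where "(f has_derivative D) (at x)" by (auto simp: differentiable_def)
    then have "(h has_derivative D) (at x)"
      by (rule has_derivative_transform_within_open[OF _ U that]) (use Suc.prems(1) in auto)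
    then show ?thesis by (auto simp: differentiable_def)
  qed
  moreover have "Ck k U (pd h i)" for i
    using Suc.IH[of "pd f i" "pd h i"] Suc.prems pd_cong[OF U, of _ f h i] by auto
  ultimately show ?case by simp
qed

lemma Ck_diffD: "Ck (Suc k) U f \<Longrightarrow> x \<in> U \<Longrightarrow> f differentiable (at x)"
  by simp

lemma Ck_pdD: "Ck (Suc k) U f \<Longrightarrow> Ck k U (pd f i)"
  by simp

lemma Ck_mono: "Ck (Suc k) U f \<Longrightarrow> Ck k U f"
proof (induction k arbitrary: f)
  case 0
  then show ?case
    by (auto intro!: continuous_at_imp_continuous_on differentiable_imp_continuous_within)
next
  case (Suc k)
  then show ?case by simp
qed

lemma Ck_le: "k \<le> m \<Longrightarrow> Ck m U f \<Longrightarrow> Ck k U f"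
proof (induction m)
  case 0 then show ?case by simp
next
  case (Suc m)
  then show ?case using Ck_mono by (metis le_Suc_eq)
qed

context
  fixes U :: "(real^'n) set"
  assumes U: "open U"
begin

lemma Ck_const: "Ck k U (\<lambda>y. c)"
proof (induction k arbitrary: c)
  case 0 then show ?case by simp
next
  case (Suc k)
  have "pd (\<lambda>y::real^'n. c) i = (\<lambda>x. 0)" for i by (rule ext) (rule pd_const)
  moreover have "Ck k U (\<lambda>y::real^'n. 0)" using Suc.IH[of 0] .
  ultimately show ?case by (simp del: Ck.simps(1))
qed

lemma Ck_add: "Ck k U f \<Longrightarrow> Ck k U h \<Longrightarrow> Ck k U (\<lambda>y. f y + h y)"
proof (induction k arbitrary: f h)
  case 0 then show ?case by (auto intro: continuous_intros)
next
  case (Suc k)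
  have "Ck k U (pd (\<lambda>y. f y + h y) i)" for i
    by (rule Ck_cong[OF U _ Suc.IH[of "pd f i" "pd h i"]])
       (use Suc.prems in \<open>auto simp: pd_add\<close>)
  then show ?case using Suc.prems by simp
qed

lemma Ck_uminus: "Ck k U f \<Longrightarrow> Ck k U (\<lambda>y. - f y)"
proof (induction k arbitrary: f)
  case 0 then show ?case by (auto intro: continuous_intros)
next
  case (Suc k)
  have "Ck k U (pd (\<lambda>y. - f y) i)" for i
    by (rule Ck_cong[OF U _ Suc.IH[of "pd f i"]])
       (use Suc.prems in \<open>auto simp: pd_uminus\<close>)
  then show ?case using Suc.prems by simp
qed

lemma Ck_diff: "Ck k U f \<Longrightarrow> Ck k U h \<Longrightarrow> Ck k U (\<lambda>y. f y - h y)"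
proof -
  assume a: "Ck k U f" "Ck k U h"
  show ?thesis using Ck_add[OF a(1) Ck_uminus[OF a(2)]] by simp
qed

lemma Ck_mult: "Ck k U f \<Longrightarrow> Ck k U h \<Longrightarrow> Ck k U (\<lambda>y. f y * h y)"
proof (induction k arbitrary: f h)
  case 0 then show ?case by (auto intro: continuous_intros)
next
  case (Suc k)
  have "Ck k U (\<lambda>y. f y * pd h i y + pd f i y * h y)" for i
    using Suc.prems by (intro Ck_add Suc.IH) (auto intro: Ck_mono)
  then have "Ck k U (pd (\<lambda>y. f y * h y) i)" for i
    by (rule Ck_cong[OF U, rotated]) (use Suc.prems in \<open>auto simp: pd_mult\<close>)
  then show ?case using Suc.prems by simp
qed

lemma Ck_sum: "finite S \<Longrightarrow> (\<And>a. a \<in> S \<Longrightarrow> Ck k U (f a)) \<Longrightarrow> Ck k U (\<lambda>y. \<Sum>a\<in>S. f a y)"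
  by (induction S rule: finite_induct) (auto intro: Ck_add Ck_const)

lemma Ck_prod: "finite S \<Longrightarrow> (\<And>a. a \<in> S \<Longrightarrow> Ck k U (f a)) \<Longrightarrow> Ck k U (\<lambda>y. \<Prod>a\<in>S. f a y)"
  by (induction S rule: finite_induct) (auto intro: Ck_mult Ck_const)

lemma Ck_exp: "Ck k U f \<Longrightarrow> Ck k U (\<lambda>y. exp (f y))"
proof (induction k arbitrary: f)
  case 0 then show ?case by (auto intro: continuous_intros)
next
  case (Suc k)
  have "Ck k U (\<lambda>y. exp (f y) * pd f i y)" for i
    using Suc.prems by (intro Ck_mult Suc.IH) (auto intro: Ck_mono)
  then have "Ck k U (pd (\<lambda>y. exp (f y)) i)" for i
    by (rule Ck_cong[OF U, rotated]) (use Suc.prems in \<open>auto simp: pd_exp\<close>)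
  moreover have "(\<lambda>y. exp (f y)) differentiable (at x)" if "x \<in> U" for x
    using Suc.prems that
    by (auto intro!: differentiable_compose[of exp] DERIV_differentiable[OF DERIV_exp])
  ultimately show ?case using Suc.prems by simp
qed

lemma Ck_inverse: "Ck k U f \<Longrightarrow> (\<And>y. y \<in> U \<Longrightarrow> f y \<noteq> 0) \<Longrightarrow> Ck k U (\<lambda>y. inverse (f y))"
proof (induction k arbitrary: f)
  case 0 then show ?case by (auto intro: continuous_intros)
next
  case (Suc k)
  have "Ck k U (\<lambda>y. - (pd f i y * (inverse (f y) * inverse (f y))))" for i
    using Suc.prems by (intro Ck_uminus Ck_mult Suc.IH) (auto intro: Ck_mono)
  then have "Ck k U (pd (\<lambda>y. inverse (f y)) i)" for i
    by (rule Ck_cong[OF U, rotated]) (use Suc.prems in \<open>auto simp: pd_inverse power2_eq_square\<close>)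
  then show ?case using Suc.prems by simp
qed

lemma Ck_sqrt: "Ck k U f \<Longrightarrow> (\<And>y. y \<in> U \<Longrightarrow> f y > 0) \<Longrightarrow> Ck k U (\<lambda>y. sqrt (f y))"
proof (induction k arbitrary: f)
  case 0 then show ?case by (auto intro: continuous_intros)
next
  case (Suc k)
  have "Ck k U (\<lambda>y. inverse (sqrt (f y)) * ((1/2) * pd f i y))" for i
    using Suc.prems by (intro Ck_mult Ck_inverse Suc.IH Ck_const) (auto intro: Ck_mono dest: Suc.prems(2))
  then have "Ck k U (pd (\<lambda>y. sqrt (f y)) i)" for i
    by (rule Ck_cong[OF U, rotated]) (use Suc.prems in \<open>auto simp: pd_sqrt\<close>)
  moreover have "(\<lambda>y. sqrt (f y)) differentiable (at x)" if "x \<in> U" for x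
    using Suc.prems that
    by (auto intro!: differentiable_compose[of sqrt] DERIV_differentiable[OF DERIV_real_sqrt])
  ultimately show ?case using Suc.prems by simp
qed

end




lemma Ck_det:
  fixes M :: "real^'n \<Rightarrow> real^'n^'n"
  assumes U: "open U" and M: "\<And>i j. Ck k U (\<lambda>y. M y $ i $ j)"
  shows "Ck k U (\<lambda>y. det (M y))"
  unfolding det_def
  by (intro Ck_sum[OF U] Ck_mult[OF U] Ck_prod[OF U] Ck_const[OF U] M)
     (auto simp: finite_permutations)

lemma mv_lin:
  fixes B C :: "real^'n^'m"
  shows "((a::real) *\<^sub>R B + b *\<^sub>R C) *v x = a *\<^sub>R (B *v x) + b *\<^sub>R (C *v x)"
  by (simp add: vec_eq_iff matrix_vector_mult_def sum.distrib sum_distrib_left algebra_simps)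

lemma mult_delta1: "(x::real) * (if P then 1 else 0) = (if P then x else 0)" by simp

lemma det_pos:
  fixes A :: "real^'n^'n"
  assumes pos: "\<And>\<xi>. \<xi> \<noteq> 0 \<Longrightarrow> \<xi> \<bullet> (A *v \<xi>) > 0"
  shows "det A > 0"
proof (rule ccontr)
  assume "\<not> det A > 0"
  then have le: "det A \<le> 0" by simp
  define \<phi> where "\<phi> = (\<lambda>t::real. det ((1 - t) *\<^sub>R mat 1 + t *\<^sub>R A))"
  have cont: "continuous_on {0..1} \<phi>"
    unfolding \<phi>_def det_def by (intro continuous_intros)
  have "\<phi> 1 \<le> 0" "0 \<le> \<phi> 0" using le by (auto simp: \<phi>_def)
  then obtain t where t: "0 \<le> t" "t \<le> 1" "\<phi> t = 0"
    using IVT2'[of \<phi> 1 0 0, OF _ _ _ cont] by auto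
  define M where "M = (1 - t) *\<^sub>R mat 1 + t *\<^sub>R A"
  have "det M = 0" using t by (simp add: \<phi>_def M_def)
  then have "\<not> invertible M" by (simp add: invertible_det_nz)
  then have "\<not> (\<forall>x. M *v x = 0 \<longrightarrow> x = 0)"
    using invertible_left_inverse matrix_left_invertible_ker by blast
  then obtain \<xi> where xi: "\<xi> \<noteq> 0" "M *v \<xi> = 0" by blast
  have Mxi: "M *v \<xi> = (1 - t) *\<^sub>R \<xi> + t *\<^sub>R (A *v \<xi>)"
    using mv_lin[of "1-t" "mat 1" t A \<xi>] by (simp add: M_def)
  have "\<xi> \<bullet> (M *v \<xi>) = (1 - t) * (\<xi> \<bullet> \<xi>) + t * (\<xi> \<bullet> (A *v \<xi>))"
    by (simp add: Mxi inner_add_right)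
  moreover have "(1 - t) * (\<xi> \<bullet> \<xi>) + t * (\<xi> \<bullet> (A *v \<xi>)) > 0"
  proof (cases "t = 0")
    case True then show ?thesis using xi by simp
  next
    case False
    then have "t * (\<xi> \<bullet> (A *v \<xi>)) > 0" using t pos[OF xi(1)] by simp
    moreover have "(1 - t) * (\<xi> \<bullet> \<xi>) \<ge> 0" using t by simp
    ultimately show ?thesis by linarith
  qed
  ultimately show False using xi by simp
qed

lemma inv_props:
  fixes A :: "real^'n^'n"
  assumes "det A \<noteq> 0"
  shows "A ** matrix_inv A = mat 1" "matrix_inv A ** A = mat 1"
proof -
  have "\<exists>A'. A ** A' = mat 1 \<and> A' ** A = mat 1"
    using assms by (simp add: invertible_det_nz[symmetric] invertible_def)
  then have "A ** matrix_inv A = mat 1 \<and> matrix_inv A ** A = mat 1"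
    unfolding matrix_inv_def by (rule someI_ex)
  then show "A ** matrix_inv A = mat 1" "matrix_inv A ** A = mat 1" by auto
qed

lemma inv_entry:
  fixes A :: "real^'n^'n"
  assumes d: "det A \<noteq> 0"
  shows "matrix_inv A $ k $ l = det (\<chi> i j. if j = k then axis l 1 $ i else A$i$j) / det A"
proof -
  have "A *v (matrix_inv A *v axis l 1) = axis l 1"
    by (simp add: matrix_vector_mul_assoc inv_props[OF d])
  then have "matrix_inv A *v axis l 1 = (\<chi> k. det(\<chi> i j. if j=k then axis l 1 $i else A$i$j) / det A)"
    using cramer[OF d] by blast
  moreover have "(matrix_inv A *v axis l 1) $ k = matrix_inv A $ k $ l"
    by (simp add: matrix_vector_mult_def axis_def mult_delta1)
  ultimately show ?thesis by simp
qed




locale rg =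
  fixes U :: "(real^'n) set" and g :: "real^'n \<Rightarrow> real^'n^'n"
  assumes U: "open U"
    and gm: "riem_metric U g"
    and gC: "\<And>i j. Ck 3 U (\<lambda>x. g x $ i $ j)"
begin

definition CV :: "nat \<Rightarrow> (real^'n \<Rightarrow> real^'n) \<Rightarrow> bool" where
  "CV k W \<longleftrightarrow> (\<forall>i. Ck k U (\<lambda>y. W y $ i))"

lemma detpos: "x \<in> U \<Longrightarrow> det (g x) > 0"
  using gm by (auto simp: riem_metric_def intro!: det_pos)

lemma detnz: "x \<in> U \<Longrightarrow> det (g x) \<noteq> 0"
  using detpos[of x] by simp

lemma gsym: "x \<in> U \<Longrightarrow> g x $ i $ j = g x $ j $ i"
proof -
  assume x: "x \<in> U"
  have "transpose (g x) = g x" using gm x by (simp add: riem_metric_def)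
  then have "transpose (g x) $ j $ i = g x $ j $ i" by simp
  then show ?thesis by (simp add: transpose_def)
qed

lemma ginv1: "x \<in> U \<Longrightarrow> g x ** ginv g x = mat 1"
  using inv_props(1)[of "g x"] detpos[of x] by (simp add: ginv_def)

lemma ginv2: "x \<in> U \<Longrightarrow> ginv g x ** g x = mat 1"
  using inv_props(2)[of "g x"] detpos[of x] by (simp add: ginv_def)

lemma Ckg: "k \<le> 3 \<Longrightarrow> Ck k U (\<lambda>y. g y $ i $ j)"
  using Ck_le gC by blast

lemma Ckdet: "k \<le> 3 \<Longrightarrow> Ck k U (\<lambda>y. det (g y))"
  by (rule Ck_det[OF U Ckg])

lemma Ckginv:
  assumes k: "k \<le> 3"
  shows "Ck k U (\<lambda>y. ginv g y $ i $ j)"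
proof -
  have "Ck k U (\<lambda>y. det (\<chi> a b. if b = i then axis j 1 $ a else g y $ a $ b) * inverse (det (g y)))"
  proof (intro Ck_mult[OF U] Ck_inverse[OF U] Ckdet[OF k] Ck_det[OF U])
    fix a b
    show "Ck k U (\<lambda>y. (\<chi> a b. if b = i then axis j 1 $ a else g y $ a $ b) $ a $ b)"
      by (cases "b = i") (simp_all add: Ck_const[OF U] Ckg[OF k])
  qed (simp add: detnz)
  then show ?thesis
    by (rule Ck_cong[OF U, rotated]) (simp add: ginv_def inv_entry detnz divide_inverse)
qed

lemma Cksdet: "k \<le> 3 \<Longrightarrow> Ck k U (\<lambda>y. sqrt (det (g y)))"
  by (rule Ck_sqrt[OF U Ckdet]) (auto intro: detpos)

lemma Ckisdet: "k \<le> 3 \<Longrightarrow> Ck k U (\<lambda>y. 1 / sqrt (det (g y)))"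
proof -
  assume k: "k \<le> 3"
  have "Ck k U (\<lambda>y. inverse (sqrt (det (g y))))"
    by (rule Ck_inverse[OF U Cksdet[OF k]]) (simp add: detnz)
  then show ?thesis by (simp add: inverse_eq_divide)
qed

lemma CV_grad: "k \<le> 3 \<Longrightarrow> Ck (Suc k) U f \<Longrightarrow> CV k (grad g f)"
  unfolding CV_def grad_def matrix_vector_mult_def
  by (auto intro!: Ck_sum[OF U] Ck_mult[OF U] Ckginv)

lemma CV_add: "CV k W \<Longrightarrow> CV k Z \<Longrightarrow> CV k (\<lambda>y. W y + Z y)"
  unfolding CV_def by (auto intro: Ck_add[OF U])

lemma CV_scale: "Ck k U f \<Longrightarrow> CV k W \<Longrightarrow> CV k (\<lambda>y. f y *\<^sub>R W y)"
  unfolding CV_def by (auto intro: Ck_mult[OF U])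

lemma CV_mv: "(\<And>i j. Ck k U (\<lambda>y. M y $ i $ j)) \<Longrightarrow> CV k W \<Longrightarrow> CV k (\<lambda>y. M y *v W y)"
  unfolding CV_def matrix_vector_mult_def by (auto intro!: Ck_sum[OF U] Ck_mult[OF U])

lemma Ck_ginner: "k \<le> 3 \<Longrightarrow> CV k W \<Longrightarrow> CV k Z \<Longrightarrow> Ck k U (\<lambda>y. ginner g y (W y) (Z y))"
  unfolding CV_def ginner_def by (auto intro!: Ck_sum[OF U] Ck_mult[OF U] Ckg)

lemma Ck_gdiv: "k \<le> 2 \<Longrightarrow> CV (Suc k) W \<Longrightarrow> Ck k U (gdiv g W)"
proof -
  assume k: "k \<le> 2" and W: "CV (Suc k) W"
  have "Ck k U (\<lambda>x. 1 / sqrt (det (g x)) * (\<Sum>i\<in>UNIV. pd (\<lambda>y. sqrt (det (g y)) * W y $ i) i x))"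
    using k W unfolding CV_def
    by (intro Ck_mult[OF U] Ckisdet Ck_sum[OF U] Ck_pdD Cksdet) auto
  then show ?thesis unfolding gdiv_def by (simp add: fun_eq_iff)
qed

end




context rg begin

lemma CV_diffD: "CV (Suc k) W \<Longrightarrow> x \<in> U \<Longrightarrow> (\<lambda>y. W y $ i) differentiable (at x)"
  unfolding CV_def by simp

lemma sdW_diff: "CV 1 W \<Longrightarrow> x \<in> U \<Longrightarrow> (\<lambda>y. sqrt (det (g y)) * W y $ i) differentiable (at x)"
proof -
  assume W: "CV 1 W" and x: "x \<in> U"
  have "Ck 1 U (\<lambda>y. sqrt (det (g y)) * W y $ i)"
    by (rule Ck_mult[OF U Cksdet]) (use W in \<open>auto simp: CV_def\<close>)
  then show ?thesis using x by (simp add: One_nat_def)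
qed

lemma g_diff: "x \<in> U \<Longrightarrow> (\<lambda>y. g y $ a $ b) differentiable (at x)"
  using gC[of a b] by (simp add: numeral_eq_Suc)

lemma sd_nz: "x \<in> U \<Longrightarrow> sqrt (det (g x)) \<noteq> 0"
  using detpos[of x] by simp

lemma gdiv_add:
  assumes W: "CV 1 W" and Z: "CV 1 Z" and x: "x \<in> U"
  shows "gdiv g (\<lambda>y. W y + Z y) x = gdiv g W x + gdiv g Z x"
proof -
  have "pd (\<lambda>y. sqrt (det (g y)) * (W y + Z y) $ i) i x
      = pd (\<lambda>y. sqrt (det (g y)) * W y $ i) i x + pd (\<lambda>y. sqrt (det (g y)) * Z y $ i) i x" for i
  proof -
    have eq: "(\<lambda>y. sqrt (det (g y)) * (W y + Z y) $ i)
        = (\<lambda>y. sqrt (det (g y)) * W y $ i + sqrt (det (g y)) * Z y $ i)"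
      by (simp add: fun_eq_iff algebra_simps)
    show ?thesis unfolding eq by (rule pd_add[OF sdW_diff[OF W x] sdW_diff[OF Z x]])
  qed
  then show ?thesis by (simp add: gdiv_def sum.distrib distrib_left)
qed

lemma gdiv_diff:
  assumes W: "CV 1 W" and Z: "CV 1 Z" and x: "x \<in> U"
  shows "gdiv g (\<lambda>y. W y - Z y) x = gdiv g W x - gdiv g Z x"
proof -
  have "pd (\<lambda>y. sqrt (det (g y)) * (W y - Z y) $ i) i x
      = pd (\<lambda>y. sqrt (det (g y)) * W y $ i) i x - pd (\<lambda>y. sqrt (det (g y)) * Z y $ i) i x" for i
  proof -
    have eq: "(\<lambda>y. sqrt (det (g y)) * (W y - Z y) $ i)
        = (\<lambda>y. sqrt (det (g y)) * W y $ i - sqrt (det (g y)) * Z y $ i)"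
      by (simp add: fun_eq_iff algebra_simps)
    show ?thesis unfolding eq by (rule pd_diff[OF sdW_diff[OF W x] sdW_diff[OF Z x]])
  qed
  then show ?thesis by (simp add: gdiv_def sum_subtractf right_diff_distrib)
qed

lemma gdiv_cong:
  assumes x: "x \<in> U" and eq: "\<And>y. y \<in> U \<Longrightarrow> W y = Z y"
  shows "gdiv g W x = gdiv g Z x"
proof -
  have "pd (\<lambda>y. sqrt (det (g y)) * W y $ i) i x = pd (\<lambda>y. sqrt (det (g y)) * Z y $ i) i x" for i
    by (rule pd_cong[OF U x]) (simp add: eq)
  then show ?thesis by (simp add: gdiv_def)
qed

lemma ginner_alt: "x \<in> U \<Longrightarrow> ginner g x W Z = (g x *v W) \<bullet> Z"
proof -
  assume x: "x \<in> U"
  have "ginner g x W Z = (\<Sum>j\<in>UNIV. \<Sum>i\<in>UNIV. g x $ i $ j * W $ i * Z $ j)"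
    unfolding ginner_def by (rule sum.swap)
  also have "\<dots> = (\<Sum>j\<in>UNIV. (\<Sum>i\<in>UNIV. g x $ j $ i * W $ i) * Z $ j)"
    by (simp add: sum_distrib_right gsym[OF x])
  also have "\<dots> = (g x *v W) \<bullet> Z"
    by (simp add: inner_vec_def matrix_vector_mult_def)
  finally show ?thesis .
qed

lemma ginner_inv: "x \<in> U \<Longrightarrow> ginner g x (ginv g x *v c) T = c \<bullet> T"
  by (simp add: ginner_alt matrix_vector_mul_assoc ginv1)

lemma ginner_grad: "x \<in> U \<Longrightarrow> ginner g x (grad g f x) T = (\<Sum>i\<in>UNIV. pd f i x * T $ i)"
  by (simp add: grad_def ginner_inv inner_vec_def)

lemma ginner_dcontr: "x \<in> U \<Longrightarrow> ginner g x (dcontr g W Z x) T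
    = (\<Sum>i\<in>UNIV. ginner g x (covD g W x (axis i 1)) (Z x) * T $ i)"
  by (simp add: dcontr_def ginner_inv inner_vec_def)

lemma ginner_sym: "x \<in> U \<Longrightarrow> ginner g x W Z = ginner g x Z W"
proof -
  assume x: "x \<in> U"
  have "ginner g x W Z = (\<Sum>j\<in>UNIV. \<Sum>i\<in>UNIV. g x $ i $ j * W $ i * Z $ j)"
    unfolding ginner_def by (rule sum.swap)
  also have "\<dots> = ginner g x Z W"
    unfolding ginner_def by (simp add: gsym[OF x] mult_ac)
  finally show ?thesis .
qed

lemma ginner_add_left: "ginner g x (W + Z) T = ginner g x W T + ginner g x Z T"
  by (simp add: ginner_def algebra_simps sum.distrib)

lemma ginner_add_right: "ginner g x T (W + Z) = ginner g x T W + ginner g x T Z"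
  by (simp add: ginner_def algebra_simps sum.distrib)

lemma ginner_scale_left: "ginner g x (c *\<^sub>R W) T = c * ginner g x W T"
  by (simp add: ginner_def algebra_simps sum_distrib_left)

lemma ginner_scale_right: "ginner g x T (c *\<^sub>R W) = c * ginner g x T W"
  by (simp add: ginner_def algebra_simps sum_distrib_left)

lemma gdiv_scale:
  assumes f: "Ck 1 U f" and W: "CV 1 W" and x: "x \<in> U"
  shows "gdiv g (\<lambda>y. f y *\<^sub>R W y) x = f x * gdiv g W x + ginner g x (grad g f x) (W x)"
proof -
  have fd: "f differentiable (at x)" using f x by (simp add: One_nat_def)
  have "pd (\<lambda>y. sqrt (det (g y)) * (f y *\<^sub>R W y) $ i) i x
      = f x * pd (\<lambda>y. sqrt (det (g y)) * W y $ i) i x + pd f i x * (sqrt (det (g x)) * W x $ i)" for i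
  proof -
    have eq: "(\<lambda>y. sqrt (det (g y)) * (f y *\<^sub>R W y) $ i)
        = (\<lambda>y. f y * (sqrt (det (g y)) * W y $ i))"
      by (simp add: fun_eq_iff algebra_simps)
    show ?thesis unfolding eq by (rule pd_mult[OF fd sdW_diff[OF W x]])
  qed
  then have "gdiv g (\<lambda>y. f y *\<^sub>R W y) x = 1 / sqrt (det (g x)) *
     (f x * (\<Sum>i\<in>UNIV. pd (\<lambda>y. sqrt (det (g y)) * W y $ i) i x)
      + sqrt (det (g x)) * (\<Sum>i\<in>UNIV. pd f i x * W x $ i))"
    by (simp add: gdiv_def sum.distrib sum_distrib_left mult_ac)
  also have "\<dots> = f x * gdiv g W x + (\<Sum>i\<in>UNIV. pd f i x * W x $ i)"
    using sd_nz[OF x] by (simp add: gdiv_def field_simps)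
  finally show ?thesis by (simp add: ginner_grad[OF x])
qed

end




lemma compat_alg:
  fixes gx G C T :: "'n::finite \<Rightarrow> 'n \<Rightarrow> real" and w z :: "'n \<Rightarrow> real"
  assumes key: "\<And>m j. (\<Sum>k\<in>UNIV. gx k m * C k j) = (1/2) * T m j"
    and sym: "\<And>a b. gx a b = gx b a"
    and TT: "\<And>a b. T b a + T a b = 2 * G a b"
  shows "(\<Sum>a\<in>UNIV. \<Sum>b\<in>UNIV. G a b * w a * z b) =
     (\<Sum>a\<in>UNIV. \<Sum>b\<in>UNIV. gx a b * (\<Sum>j\<in>UNIV. C a j * w j) * z b) +
     (\<Sum>a\<in>UNIV. \<Sum>b\<in>UNIV. gx a b * w a * (\<Sum>j\<in>UNIV. C b j * z j))"
proof -
  have T1: "(\<Sum>a\<in>UNIV. \<Sum>b\<in>UNIV. gx a b * (\<Sum>j\<in>UNIV. C a j * w j) * z b)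
      = (\<Sum>a\<in>UNIV. \<Sum>b\<in>UNIV. (1/2) * T b a * w a * z b)"
  proof -
    have "(\<Sum>a\<in>UNIV. \<Sum>b\<in>UNIV. gx a b * (\<Sum>j\<in>UNIV. C a j * w j) * z b)
        = (\<Sum>a\<in>UNIV. \<Sum>b\<in>UNIV. \<Sum>j\<in>UNIV. gx a b * C a j * w j * z b)"
      by (simp add: sum_distrib_left sum_distrib_right mult_ac)
    also have "\<dots> = (\<Sum>b\<in>UNIV. \<Sum>a\<in>UNIV. \<Sum>j\<in>UNIV. gx a b * C a j * w j * z b)"
      by (rule sum.swap)
    also have "\<dots> = (\<Sum>b\<in>UNIV. \<Sum>j\<in>UNIV. \<Sum>a\<in>UNIV. gx a b * C a j * w j * z b)"
      by (rule sum.cong[OF refl], rule sum.swap)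
    also have "\<dots> = (\<Sum>b\<in>UNIV. \<Sum>j\<in>UNIV. (\<Sum>a\<in>UNIV. gx a b * C a j) * w j * z b)"
      by (simp add: sum_distrib_right)
    also have "\<dots> = (\<Sum>b\<in>UNIV. \<Sum>j\<in>UNIV. (1/2) * T b j * w j * z b)"
      by (simp only: key)
    also have "\<dots> = (\<Sum>a\<in>UNIV. \<Sum>b\<in>UNIV. (1/2) * T b a * w a * z b)"
      by (rule sum.swap)
    finally show ?thesis .
  qed
  have T2: "(\<Sum>a\<in>UNIV. \<Sum>b\<in>UNIV. gx a b * w a * (\<Sum>j\<in>UNIV. C b j * z j))
      = (\<Sum>a\<in>UNIV. \<Sum>b\<in>UNIV. (1/2) * T a b * w a * z b)"
  proof -
    have "(\<Sum>a\<in>UNIV. \<Sum>b\<in>UNIV. gx a b * w a * (\<Sum>j\<in>UNIV. C b j * z j))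
        = (\<Sum>a\<in>UNIV. \<Sum>b\<in>UNIV. \<Sum>j\<in>UNIV. gx b a * C b j * w a * z j)"
      by (simp add: sum_distrib_left sum_distrib_right mult_ac sym)
    also have "\<dots> = (\<Sum>a\<in>UNIV. \<Sum>j\<in>UNIV. \<Sum>b\<in>UNIV. gx b a * C b j * w a * z j)"
      by (rule sum.cong[OF refl], rule sum.swap)
    also have "\<dots> = (\<Sum>a\<in>UNIV. \<Sum>j\<in>UNIV. (\<Sum>b\<in>UNIV. gx b a * C b j) * w a * z j)"
      by (simp add: sum_distrib_right)
    also have "\<dots> = (\<Sum>a\<in>UNIV. \<Sum>j\<in>UNIV. (1/2) * T a j * w a * z j)"
      by (simp only: key)
    finally show ?thesis .
  qed
  have "(\<Sum>a\<in>UNIV. \<Sum>b\<in>UNIV. G a b * w a * z b)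
      = (\<Sum>a\<in>UNIV. \<Sum>b\<in>UNIV. (1/2) * T b a * w a * z b + (1/2) * T a b * w a * z b)"
  proof (intro sum.cong refl)
    fix a b
    show "G a b * w a * z b = (1/2) * T b a * w a * z b + (1/2) * T a b * w a * z b"
    proof -
      have hG: "G a b = (T b a + T a b) / 2" using TT[where a=a and b=b] by simp
      show ?thesis unfolding hG by (simp add: field_simps)
    qed
  qed
  also have "\<dots> = (\<Sum>a\<in>UNIV. \<Sum>b\<in>UNIV. (1/2) * T b a * w a * z b) + (\<Sum>a\<in>UNIV. \<Sum>b\<in>UNIV. (1/2) * T a b * w a * z b)"
    by (simp add: sum.distrib)
  finally show ?thesis using T1 T2 by simp
qed


lemma delta_mult: "(if P then 1 else 0) * (y::real) = (if P then y else 0)" by simp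

context rg begin

lemma covD_axis: "covD g W x (axis i 1) $ k = pd (\<lambda>y. W y $ k) i x + (\<Sum>j\<in>UNIV. chr g k i j x * W x $ j)"
  by (simp add: covD_def axis_def delta_mult)

lemma gginv_delta: "x \<in> U \<Longrightarrow> (\<Sum>k\<in>UNIV. g x $ m $ k * ginv g x $ k $ l) = (if m = l then 1 else 0)"
proof -
  assume x: "x \<in> U"
  have "(g x ** ginv g x) $ m $ l = mat 1 $ m $ l" using ginv1[OF x] by simp
  then show ?thesis by (simp add: matrix_matrix_mult_def mat_def)
qed

lemma chr_key:
  assumes x: "x \<in> U"
  shows "(\<Sum>k\<in>UNIV. g x $ k $ m * chr g k i j x) = (1/2) *
     (pd (\<lambda>y. g y $ j $ m) i x + pd (\<lambda>y. g y $ i $ m) j x - pd (\<lambda>y. g y $ i $ j) m x)"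
proof -
  define T where "T = (\<lambda>l. pd (\<lambda>y. g y $ j $ l) i x + pd (\<lambda>y. g y $ i $ l) j x - pd (\<lambda>y. g y $ i $ j) l x)"
  have "(\<Sum>k\<in>UNIV. g x $ k $ m * chr g k i j x)
      = (\<Sum>k\<in>UNIV. \<Sum>l\<in>UNIV. (1/2) * (g x $ m $ k * ginv g x $ k $ l * T l))"
  proof (rule sum.cong[OF refl])
    fix k
    show "g x $ k $ m * chr g k i j x = (\<Sum>l\<in>UNIV. (1/2) * (g x $ m $ k * ginv g x $ k $ l * T l))"
      unfolding chr_def T_def by (simp add: gsym[OF x, of k m] sum_distrib_left mult_ac)
  qed
  also have "\<dots> = (\<Sum>l\<in>UNIV. \<Sum>k\<in>UNIV. (1/2) * (g x $ m $ k * ginv g x $ k $ l * T l))"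
    by (rule sum.swap)
  also have "\<dots> = (1/2) * (\<Sum>l\<in>UNIV. (\<Sum>k\<in>UNIV. g x $ m $ k * ginv g x $ k $ l) * T l)"
    by (simp add: sum_distrib_left sum_distrib_right)
  also have "\<dots> = (1/2) * (\<Sum>l\<in>UNIV. (if m = l then T l else 0))"
    by (simp only: gginv_delta[OF x] delta_mult)
  also have "\<dots> = (1/2) * T m"
    by simp
  finally show ?thesis by (simp add: T_def)
qed

lemma pd_ginner:
  assumes W: "CV 1 W" and Z: "CV 1 Z" and x: "x \<in> U"
  shows "pd (\<lambda>y. ginner g y (W y) (Z y)) i x
     = ginner g x (covD g W x (axis i 1)) (Z x) + ginner g x (W x) (covD g Z x (axis i 1))"
proof -
  have Wd: "(\<lambda>y. W y $ a) differentiable (at x)" for a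
    using CV_diffD[of 0 W x a] W x by simp
  have Zd: "(\<lambda>y. Z y $ a) differentiable (at x)" for a
    using CV_diffD[of 0 Z x a] Z x by simp
  have d1: "(\<lambda>y. g y $ a $ b * W y $ a) differentiable (at x)" for a b
    by (intro differentiable_mult g_diff x Wd)
  have d2: "(\<lambda>y. g y $ a $ b * W y $ a * Z y $ b) differentiable (at x)" for a b
    by (intro differentiable_mult d1 Zd)
  have d3: "(\<lambda>y. \<Sum>b\<in>UNIV. g y $ a $ b * W y $ a * Z y $ b) differentiable (at x)" for a
    by (rule differentiable_sum) (auto intro: d2)
  define G where "G a b = pd (\<lambda>y. g y $ a $ b) i x" for a b
  define T where "T m j = pd (\<lambda>y. g y $ j $ m) i x + pd (\<lambda>y. g y $ i $ m) j x - pd (\<lambda>y. g y $ i $ j) m x" for m j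
  have "pd (\<lambda>y. ginner g y (W y) (Z y)) i x
      = (\<Sum>a\<in>UNIV. pd (\<lambda>y. \<Sum>b\<in>UNIV. g y $ a $ b * W y $ a * Z y $ b) i x)"
    unfolding ginner_def by (rule pd_sum) (auto intro: d3)
  also have "\<dots> = (\<Sum>a\<in>UNIV. \<Sum>b\<in>UNIV. pd (\<lambda>y. g y $ a $ b * W y $ a * Z y $ b) i x)"
    by (rule sum.cong[OF refl], rule pd_sum) (auto intro: d2)
  also have "\<dots> = (\<Sum>a\<in>UNIV. \<Sum>b\<in>UNIV. G a b * W x $ a * Z x $ b
       + g x $ a $ b * pd (\<lambda>y. W y $ a) i x * Z x $ b + g x $ a $ b * W x $ a * pd (\<lambda>y. Z y $ b) i x)"
    by (simp only: pd_mult[OF d1 Zd] pd_mult[OF g_diff[OF x] Wd] G_def) (simp add: algebra_simps)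
  finally have L: "pd (\<lambda>y. ginner g y (W y) (Z y)) i x = \<dots>" .
  have key: "(\<Sum>k\<in>UNIV. g x $ k $ m * chr g k i j x) = (1/2) * T m j" for m j
    unfolding T_def by (rule chr_key[OF x])
  have TT: "T b a + T a b = 2 * G a b" for a b
  proof -
    have "pd (\<lambda>y. g y $ b $ a) i x = pd (\<lambda>y. g y $ a $ b) i x"
      by (rule pd_cong[OF U x]) (simp add: gsym)
    then show ?thesis unfolding T_def G_def by simp
  qed
  have alg: "(\<Sum>a\<in>UNIV. \<Sum>b\<in>UNIV. G a b * W x $ a * Z x $ b) =
     (\<Sum>a\<in>UNIV. \<Sum>b\<in>UNIV. g x $ a $ b * (\<Sum>j\<in>UNIV. chr g a i j x * W x $ j) * Z x $ b) +
     (\<Sum>a\<in>UNIV. \<Sum>b\<in>UNIV. g x $ a $ b * W x $ a * (\<Sum>j\<in>UNIV. chr g b i j x * Z x $ j))"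
    by (rule compat_alg[where T=T, OF key gsym[OF x] TT])
  have R: "ginner g x (covD g W x (axis i 1)) (Z x) + ginner g x (W x) (covD g Z x (axis i 1))
     = (\<Sum>a\<in>UNIV. \<Sum>b\<in>UNIV. g x $ a $ b * pd (\<lambda>y. W y $ a) i x * Z x $ b + g x $ a $ b * W x $ a * pd (\<lambda>y. Z y $ b) i x)
     + ((\<Sum>a\<in>UNIV. \<Sum>b\<in>UNIV. g x $ a $ b * (\<Sum>j\<in>UNIV. chr g a i j x * W x $ j) * Z x $ b) +
     (\<Sum>a\<in>UNIV. \<Sum>b\<in>UNIV. g x $ a $ b * W x $ a * (\<Sum>j\<in>UNIV. chr g b i j x * Z x $ j)))"
    by (simp add: ginner_def covD_axis algebra_simps sum.distrib)
  show ?thesis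
    unfolding L R alg[symmetric] by (simp add: sum.distrib)
qed

end




lemma LetI: "(\<And>x. x = a \<Longrightarrow> P x) \<Longrightarrow> Let a P" by (simp add: Let_def)

lemma mv_plus: "((A::real^'n^'m) + B) *v z = A *v z + B *v z"
  by (simp add: vec_eq_iff matrix_vector_mult_def sum.distrib algebra_simps)

lemma mv_lin2: "(M::real^'n^'m) *v (a *\<^sub>R p + b *\<^sub>R q) = a *\<^sub>R (M *v p) + b *\<^sub>R (M *v q)"
  by (simp add: vec_eq_iff matrix_vector_mult_def sum.distrib sum_distrib_left algebra_simps)

context rg begin

lemma CV_mono: "CV (Suc k) W \<Longrightarrow> CV k W"
  unfolding CV_def using Ck_mono by blast

lemma gg_add: "f differentiable (at x) \<Longrightarrow> h differentiable (at x) \<Longrightarrow> x \<in> U \<Longrightarrow>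
  ginner g x (grad g (\<lambda>y. f y + h y) x) T = ginner g x (grad g f x) T + ginner g x (grad g h x) T"
  by (simp add: ginner_grad pd_add sum.distrib algebra_simps)

lemma gg_mult: "f differentiable (at x) \<Longrightarrow> h differentiable (at x) \<Longrightarrow> x \<in> U \<Longrightarrow>
  ginner g x (grad g (\<lambda>y. f y * h y) x) T = f x * ginner g x (grad g h x) T + h x * ginner g x (grad g f x) T"
  by (simp add: ginner_grad pd_mult sum.distrib sum_distrib_left algebra_simps)

lemma gg_cmult: "f differentiable (at x) \<Longrightarrow> x \<in> U \<Longrightarrow>
  ginner g x (grad g (\<lambda>y. c * f y) x) T = c * ginner g x (grad g f x) T"
  by (simp add: ginner_grad pd_mult pd_const sum_distrib_left algebra_simps)

lemma gg_pair: "CV 1 W \<Longrightarrow> CV 1 Z \<Longrightarrow> x \<in> U \<Longrightarrow>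
  ginner g x (grad g (\<lambda>y. ginner g y (W y) (Z y)) x) T
   = ginner g x (dcontr g W Z x) T + ginner g x (dcontr g Z W x) T"
proof -
  assume W: "CV 1 W" and Z: "CV 1 Z" and x: "x \<in> U"
  have "ginner g x (W x) (covD g Z x (axis i 1)) = ginner g x (covD g Z x (axis i 1)) (W x)" for i
    by (rule ginner_sym[OF x])
  then show ?thesis
    by (simp add: ginner_grad[OF x] pd_ginner[OF W Z x] ginner_dcontr[OF x] sum.distrib algebra_simps)
qed

end




lemma Ck_32: "Ck 3 U f \<Longrightarrow> Ck (Suc 2) U f" by (simp only: numeral_3_eq_3 numeral_2_eq_2)
lemma Ck_21: "Ck 2 U f \<Longrightarrow> Ck (Suc 1) U f" by (simp only: numeral_2_eq_2 One_nat_def)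
lemma Ck_10: "Ck 1 U f \<Longrightarrow> Ck (Suc 0) U f" by (simp only: One_nat_def)

theorem theorem2p1:
  fixes U :: "(real^'n) set"
    and g :: "real^'n \<Rightarrow> real^'n^'n"
    and v ell R :: "real^'n \<Rightarrow> real"
    and Q :: "real^'n \<Rightarrow> real^'n^'n"
    and Y :: "real^'n \<Rightarrow> real^'n"
  assumes U: "open U"
    and g_metric: "riem_metric U g"
    and g_C3: "\<And>i j. Ck 3 U (\<lambda>x. g x $ i $ j)"
    and v_C2: "Ck 2 U v"
    and l_C3: "Ck 3 U ell"
    and Q_C1: "\<And>i j. Ck 1 U (\<lambda>x. Q x $ i $ j)"
    and Q_sym: "\<And>x W Z. x \<in> U \<Longrightarrow> ginner g x (Q x *v W) Z = ginner g x W (Q x *v Z)"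
    and Y_C1: "\<And>i. Ck 1 U (\<lambda>x. Y x $ i)"
    and R_C1: "Ck 1 U R"
  shows "let
      theta = \<lambda>x. exp (ell x);
      u = \<lambda>x. theta x * v x;
      L1 = \<lambda>x. gnorm2 g x (grad g ell x) + R x;
      L2 = \<lambda>x. lap g ell x + R x;
      W = \<lambda>x. 2 *\<^sub>R grad g ell x + Y x;
      I1 = \<lambda>x. gdiv g (\<lambda>y. (Q y + mat 1) *v grad g u y) x
                  + ginner g x (Y x) (grad g u x) + L1 x * u x;
      I2 = \<lambda>x. - gdiv g (\<lambda>y. Q y *v grad g u y) x
                  - ginner g x (W x) (grad g u x) - L2 x * u x;
      B1 = \<lambda>x. L2 x * gdiv g Y x + L1 x * gdiv g W x
                  + ginner g x (grad g L2 x) (Y x) + ginner g x (grad g L1 x) (W x)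
                  - 2 * L1 x * L2 x;
      B2 = \<lambda>x. ginner g x (grad g L2 x) ((Q x + mat 1) *v grad g u x)
                  + ginner g x (grad g L1 x) (Q x *v grad g u x);
      B3 = \<lambda>x. ginner g x (dcontr g W (grad g u) x) ((Q x + mat 1) *v grad g u x)
                  + ginner g x (dcontr g Y (grad g u) x) (Q x *v grad g u x)
                  + L2 x * ginner g x (grad g u x) ((Q x + mat 1) *v grad g u x)
                  + L1 x * ginner g x (grad g u x) (Q x *v grad g u x)
                  - ginner g x (Y x) (grad g u x) * ginner g x (W x) (grad g u x);
      B4 = \<lambda>x. - 2 * gdiv g (\<lambda>y. (Q y + mat 1) *v grad g u y) x
                      * gdiv g (\<lambda>y. Q y *v grad g u y) x;
      F = \<lambda>x. ginner g x (dcontr g (grad g u) W x) ((Q x + mat 1) *v grad g u x)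
                 + ginner g x (dcontr g (grad g u) Y x) (Q x *v grad g u x);
      V = \<lambda>x. (2 * (ginner g x (W x) (grad g u x) + L2 x * u x)) *\<^sub>R ((Q x + mat 1) *v grad g u x)
                 + (2 * (ginner g x (Y x) (grad g u x) + L1 x * u x)) *\<^sub>R (Q x *v grad g u x)
                 + (L1 x * (u x)\<^sup>2) *\<^sub>R W x
                 + (L2 x * (u x)\<^sup>2) *\<^sub>R Y x
    in \<forall>x\<in>U. (exp (ell x) * lap g v x)\<^sup>2 + gdiv g V x
            = (I1 x)\<^sup>2 + (I2 x)\<^sup>2 + B1 x * (u x)\<^sup>2 + 2 * B2 x * u x
              + 2 * (B3 x + F x) + B4 x"
proof -
  interpret rg U g by (rule rg.intro[OF U g_metric g_C3])
  show ?thesis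
    apply (intro LetI)
    subgoal premises p for theta u L1 L2 W I1 I2 B1 B2 B3 B4 F V
    proof (intro ballI)
      fix x assume x: "x \<in> U"
      have thC: "Ck 3 U theta" unfolding p(1) by (rule Ck_exp[OF U l_C3])
      have uC: "Ck 2 U u" unfolding p(2)
        by (rule Ck_mult[OF U Ck_le[OF _ thC] v_C2]) simp
      have th1: "Ck 1 U theta" by (rule Ck_le[OF _ thC]) simp
      have u1: "Ck 1 U u" by (rule Ck_le[OF _ uC]) simp
      have gl2: "CV 2 (grad g ell)" by (rule CV_grad[OF _ Ck_32[OF l_C3]]) simp
      have gl21: "CV (Suc 1) (grad g ell)" using gl2 by (simp only: numeral_2_eq_2 One_nat_def)
      have gl1: "CV 1 (grad g ell)" by (rule CV_grad[OF _ Ck_21[OF Ck_le[OF _ l_C3]]]) simp_all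
      have gu1: "CV 1 (grad g u)" by (rule CV_grad[OF _ Ck_21[OF uC]]) simp
      have gv1: "CV 1 (grad g v)" by (rule CV_grad[OF _ Ck_21[OF v_C2]]) simp
      have Y1: "CV 1 Y" using Y_C1 by (simp add: CV_def)
      have L1C: "Ck 1 U L1" unfolding p(3) gnorm2_def
        by (rule Ck_add[OF U Ck_ginner[OF _ gl1 gl1] R_C1]) simp
      have L2C: "Ck 1 U L2" unfolding p(4) lap_def
        by (rule Ck_add[OF U Ck_gdiv[OF _ gl21] R_C1]) simp
      have W1: "CV 1 W" unfolding p(5)
        by (rule CV_add[OF CV_scale[OF Ck_const[OF U] gl1] Y1])
      have Ae: "Ck 1 U (\<lambda>y. (Q y + mat 1) $ i $ j)" for i j
        unfolding vector_add_component by (rule Ck_add[OF U Q_C1 Ck_const[OF U]])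
      have Au1: "CV 1 (\<lambda>y. (Q y + mat 1) *v grad g u y)" by (rule CV_mv[OF Ae gu1])
      have Qu1: "CV 1 (\<lambda>y. Q y *v grad g u y)" by (rule CV_mv[OF Q_C1 gu1])
      have ld: "ell differentiable (at y)" if "y \<in> U" for y using Ck_diffD[OF Ck_32[OF l_C3] that] .
      have vd: "v differentiable (at y)" if "y \<in> U" for y using Ck_diffD[OF Ck_21[OF v_C2] that] .
      have thd: "theta differentiable (at y)" if "y \<in> U" for y using Ck_diffD[OF Ck_32[OF thC] that] .
      have ud: "u differentiable (at y)" if "y \<in> U" for y using Ck_diffD[OF Ck_21[OF uC] that] .
      have L1d: "L1 differentiable (at x)" using Ck_diffD[OF Ck_10[OF L1C] x] .
      have L2d: "L2 differentiable (at x)" using Ck_diffD[OF Ck_10[OF L2C] x] .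
      have pdth: "pd theta j y = theta y * pd ell j y" if "y \<in> U" for j y
        unfolding p(1) by (rule pd_exp[OF ld[OF that]])
      have gradu: "grad g u y = theta y *\<^sub>R grad g v y + u y *\<^sub>R grad g ell y" if y: "y \<in> U" for y
      proof -
        have "pd u j y = theta y * pd v j y + u y * pd ell j y" for j
          using pdth[OF y, of j] by (simp add: p(2) pd_mult[OF thd[OF y] vd[OF y]] algebra_simps)
        then have "(\<chi> j. pd u j y) = theta y *\<^sub>R (\<chi> j. pd v j y) + u y *\<^sub>R (\<chi> j. pd ell j y)"
          by (simp add: vec_eq_iff)
        then show ?thesis by (simp add: grad_def mv_lin2)
      qed
      have S1: "I1 x + I2 x = exp (ell x) * lap g v x"
      proof -
        have a: "gdiv g (\<lambda>y. (Q y + mat 1) *v grad g u y) x - gdiv g (\<lambda>y. Q y *v grad g u y) x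
            = gdiv g (grad g u) x"
          using gdiv_diff[OF Au1 Qu1 x] by (simp add: mv_plus)
        have c: "gdiv g (grad g u) x = theta x * lap g v x + ginner g x (grad g theta x) (grad g v x)
             + (u x * lap g ell x + ginner g x (grad g u x) (grad g ell x))"
        proof -
          have "gdiv g (grad g u) x = gdiv g (\<lambda>y. theta y *\<^sub>R grad g v y + u y *\<^sub>R grad g ell y) x"
            by (rule gdiv_cong[OF x gradu])
          also have "\<dots> = gdiv g (\<lambda>y. theta y *\<^sub>R grad g v y) x + gdiv g (\<lambda>y. u y *\<^sub>R grad g ell y) x"
            by (rule gdiv_add[OF CV_scale[OF th1 gv1] CV_scale[OF u1 gl1] x])
          also have "\<dots> = theta x * lap g v x + ginner g x (grad g theta x) (grad g v x)
             + (u x * lap g ell x + ginner g x (grad g u x) (grad g ell x))"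
            by (simp only: gdiv_scale[OF th1 gv1 x] gdiv_scale[OF u1 gl1 x] lap_def)
          finally show ?thesis .
        qed
        have d: "ginner g x (grad g theta x) (grad g v x) = theta x * ginner g x (grad g ell x) (grad g v x)"
          by (simp add: ginner_grad[OF x] pdth[OF x] sum_distrib_left mult_ac)
        have e: "ginner g x (grad g u x) (grad g ell x) = theta x * ginner g x (grad g ell x) (grad g v x)
             + u x * ginner g x (grad g ell x) (grad g ell x)"
        proof -
          have "ginner g x (grad g u x) (grad g ell x) = ginner g x (grad g ell x) (grad g u x)"
            by (rule ginner_sym[OF x])
          also have "\<dots> = theta x * ginner g x (grad g ell x) (grad g v x)
             + u x * ginner g x (grad g ell x) (grad g ell x)"
            by (simp add: gradu[OF x] ginner_add_right ginner_scale_right)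
          finally show ?thesis .
        qed
        have f: "ginner g x (W x) (grad g u x) = 2 * ginner g x (grad g ell x) (grad g u x) + ginner g x (Y x) (grad g u x)"
          by (simp add: p(5) ginner_add_left ginner_scale_left)
        have e2: "ginner g x (grad g ell x) (grad g u x) = ginner g x (grad g u x) (grad g ell x)"
          by (rule ginner_sym[OF x])
        have I12: "I1 x + I2 x = (gdiv g (\<lambda>y. (Q y + mat 1) *v grad g u y) x - gdiv g (\<lambda>y. Q y *v grad g u y) x)
           + ginner g x (Y x) (grad g u x) - ginner g x (W x) (grad g u x)
           + (ginner g x (grad g ell x) (grad g ell x) + R x) * u x - (lap g ell x + R x) * u x"
          by (simp add: p(6) p(7) p(3) p(4) gnorm2_def)
        have ux: "u x = theta x * v x" by (simp add: p(2))
        have thx: "theta x = exp (ell x)" by (simp add: p(1))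
        show ?thesis
          unfolding I12 a c d f e2 e thx[symmetric] ux by (simp add: algebra_simps)
      qed
      have qC: "Ck 1 U (\<lambda>y. ginner g y (W y) (grad g u y))" by (rule Ck_ginner[OF _ W1 gu1]) simp
      have pC: "Ck 1 U (\<lambda>y. ginner g y (Y y) (grad g u y))" by (rule Ck_ginner[OF _ Y1 gu1]) simp
      have u2C: "Ck 1 U (\<lambda>y. (u y)\<^sup>2)" using Ck_mult[OF U u1 u1] by (simp add: power2_eq_square)
      have f1C: "Ck 1 U (\<lambda>y. 2 * (ginner g y (W y) (grad g u y) + L2 y * u y))"
        by (rule Ck_mult[OF U Ck_const[OF U] Ck_add[OF U qC Ck_mult[OF U L2C u1]]])
      have f2C: "Ck 1 U (\<lambda>y. 2 * (ginner g y (Y y) (grad g u y) + L1 y * u y))"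
        by (rule Ck_mult[OF U Ck_const[OF U] Ck_add[OF U pC Ck_mult[OF U L1C u1]]])
      have f3C: "Ck 1 U (\<lambda>y. L1 y * (u y)\<^sup>2)" by (rule Ck_mult[OF U L1C u2C])
      have f4C: "Ck 1 U (\<lambda>y. L2 y * (u y)\<^sup>2)" by (rule Ck_mult[OF U L2C u2C])
      note c1 = CV_scale[OF f1C Au1] and c2 = CV_scale[OF f2C Qu1]
        and c3 = CV_scale[OF f3C W1] and c4 = CV_scale[OF f4C Y1]
      have GV: "gdiv g V x =
          gdiv g (\<lambda>y. (2 * (ginner g y (W y) (grad g u y) + L2 y * u y)) *\<^sub>R ((Q y + mat 1) *v grad g u y)) x
        + gdiv g (\<lambda>y. (2 * (ginner g y (Y y) (grad g u y) + L1 y * u y)) *\<^sub>R (Q y *v grad g u y)) x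
        + gdiv g (\<lambda>y. (L1 y * (u y)\<^sup>2) *\<^sub>R W y) x
        + gdiv g (\<lambda>y. (L2 y * (u y)\<^sup>2) *\<^sub>R Y y) x"
        unfolding p(13)
        by (simp only: gdiv_add[OF CV_add[OF CV_add[OF c1 c2] c3] c4 x]
            gdiv_add[OF CV_add[OF c1 c2] c3 x] gdiv_add[OF c1 c2 x])
      have qd: "(\<lambda>y. ginner g y (W y) (grad g u y)) differentiable (at x)" using Ck_diffD[OF Ck_10[OF qC] x] .
      have pd': "(\<lambda>y. ginner g y (Y y) (grad g u y)) differentiable (at x)" using Ck_diffD[OF Ck_10[OF pC] x] .
      have u2d: "(\<lambda>y. (u y)\<^sup>2) differentiable (at x)" using Ck_diffD[OF Ck_10[OF u2C] x] .
      have gsq: "ginner g x (grad g (\<lambda>y. (u y)\<^sup>2) x) T = 2 * u x * ginner g x (grad g u x) T" for T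
      proof -
        have "(\<lambda>y. (u y)\<^sup>2) = (\<lambda>y. u y * u y)" by (simp add: fun_eq_iff power2_eq_square)
        then show ?thesis by (simp add: gg_mult[OF ud[OF x] ud[OF x] x])
      qed
      have G1: "ginner g x (grad g (\<lambda>y. 2 * (ginner g y (W y) (grad g u y) + L2 y * u y)) x) T
        = 2 * (ginner g x (dcontr g W (grad g u) x) T + ginner g x (dcontr g (grad g u) W x) T
             + (L2 x * ginner g x (grad g u x) T + u x * ginner g x (grad g L2 x) T))" for T
        by (simp only: gg_cmult[OF differentiable_add[OF qd differentiable_mult[OF L2d ud[OF x]]] x]
            gg_add[OF qd differentiable_mult[OF L2d ud[OF x]] x] gg_mult[OF L2d ud[OF x] x]
            gg_pair[OF W1 gu1 x])
      have G2: "ginner g x (grad g (\<lambda>y. 2 * (ginner g y (Y y) (grad g u y) + L1 y * u y)) x) T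
        = 2 * (ginner g x (dcontr g Y (grad g u) x) T + ginner g x (dcontr g (grad g u) Y x) T
             + (L1 x * ginner g x (grad g u x) T + u x * ginner g x (grad g L1 x) T))" for T
        by (simp only: gg_cmult[OF differentiable_add[OF pd' differentiable_mult[OF L1d ud[OF x]]] x]
            gg_add[OF pd' differentiable_mult[OF L1d ud[OF x]] x] gg_mult[OF L1d ud[OF x] x]
            gg_pair[OF Y1 gu1 x])
      have G3: "ginner g x (grad g (\<lambda>y. L1 y * (u y)\<^sup>2) x) T
         = L1 x * (2 * u x * ginner g x (grad g u x) T) + (u x)\<^sup>2 * ginner g x (grad g L1 x) T" for T
        by (simp only: gg_mult[OF L1d u2d x] gsq)
      have G4: "ginner g x (grad g (\<lambda>y. L2 y * (u y)\<^sup>2) x) T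
         = L2 x * (2 * u x * ginner g x (grad g u x) T) + (u x)\<^sup>2 * ginner g x (grad g L2 x) T" for T
        by (simp only: gg_mult[OF L2d u2d x] gsq)
      have symW: "ginner g x (grad g u x) (W x) = ginner g x (W x) (grad g u x)" by (rule ginner_sym[OF x])
      have symY: "ginner g x (grad g u x) (Y x) = ginner g x (Y x) (grad g u x)" by (rule ginner_sym[OF x])
      have GV2: "gdiv g V x =
          2 * (ginner g x (W x) (grad g u x) + L2 x * u x) * gdiv g (\<lambda>y. (Q y + mat 1) *v grad g u y) x
        + 2 * (ginner g x (dcontr g W (grad g u) x) ((Q x + mat 1) *v grad g u x)
             + ginner g x (dcontr g (grad g u) W x) ((Q x + mat 1) *v grad g u x)
             + (L2 x * ginner g x (grad g u x) ((Q x + mat 1) *v grad g u x)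
                + u x * ginner g x (grad g L2 x) ((Q x + mat 1) *v grad g u x)))
        + 2 * (ginner g x (Y x) (grad g u x) + L1 x * u x) * gdiv g (\<lambda>y. Q y *v grad g u y) x
        + 2 * (ginner g x (dcontr g Y (grad g u) x) (Q x *v grad g u x)
             + ginner g x (dcontr g (grad g u) Y x) (Q x *v grad g u x)
             + (L1 x * ginner g x (grad g u x) (Q x *v grad g u x)
                + u x * ginner g x (grad g L1 x) (Q x *v grad g u x)))
        + L1 x * (u x)\<^sup>2 * gdiv g W x
        + (L1 x * (2 * u x * ginner g x (W x) (grad g u x)) + (u x)\<^sup>2 * ginner g x (grad g L1 x) (W x))
        + L2 x * (u x)\<^sup>2 * gdiv g Y x
        + (L2 x * (2 * u x * ginner g x (Y x) (grad g u x)) + (u x)\<^sup>2 * ginner g x (grad g L2 x) (Y x))"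
        unfolding GV gdiv_scale[OF f1C Au1 x] gdiv_scale[OF f2C Qu1 x] gdiv_scale[OF f3C W1 x]
          gdiv_scale[OF f4C Y1 x] G1 G2 G3 G4 symW symY
        by simp
      have I1x: "I1 x = gdiv g (\<lambda>y. (Q y + mat 1) *v grad g u y) x + ginner g x (Y x) (grad g u x) + L1 x * u x"
        by (simp add: p(6))
      have I2x: "I2 x = - gdiv g (\<lambda>y. Q y *v grad g u y) x - ginner g x (W x) (grad g u x) - L2 x * u x"
        by (simp add: p(7))
      show "(exp (ell x) * lap g v x)\<^sup>2 + gdiv g V x
            = (I1 x)\<^sup>2 + (I2 x)\<^sup>2 + B1 x * (u x)\<^sup>2 + 2 * B2 x * u x
              + 2 * (B3 x + F x) + B4 x"
        unfolding S1[symmetric] GV2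
        unfolding I1x I2x p(8) p(9) p(10) p(11) p(12)
        by (simp add: algebra_simps power2_eq_square)
    qed
    done
qed



end
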